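(* (i) Let $I,J$ be sets and $R\colon I\times J\to\{0,1\}\subseteq[0,1]$ a boolean ($\{0,1\}$-valued) relation. Then $f_R(x)\cdot f_R(y)\le f_R(x\cdot y)$ for all $x,y\in[0,1]^I$. (ii) Let $\mathbf A,\mathbf B$ be semisimple Pavelka algebras and $f\colon A\to B$, $g\colon B\to A$ with $f\leftrightarrows g$. If $f(x)\cdot f(y)\le f(x\cdot y)$ for all $x,y\in A$, then the relation $R\colon\mathrm{Spec_M}\mathbf A\times\mathrm{Spec_M}\mathbf B\to[0,1]$, $R(F,G)=\bigwedge_{a\in A}(f(a)/G\rightarrow a/F)$, is $\{0,1\}$-valued.
   Context: An MV-algebra $(A;\oplus,\neg,0)$ carries derived operations $1=\neg0$, $x\cdot y=\neg(\neg x\oplus\neg y)$, $x\rightarrow y=\neg x\oplus y$, order $x\le y$ iff $\neg x\oplus y=1$. The standard MV-algebra is $[0,1]$ with $x\oplus y=\min\{x+y,1\}$, $\neg x=1-x$. A Pavelka algebra is $\mathbf A=(A;\oplus,\neg,\{\mathbf r\mid r\in[0,1]\cap\mathbb Q\})$ with $(A;\oplus,\neg,\mathbf 0)$ an MV-algebra, $\mathbf r\oplus\mathbf s=\mathbf t$ whenever $\min\{r+s,1\}=t$, $\neg\mathbf r=\mathbf s$ whenever $1-r=s$. Filters are filters of the MV-reduct; $\mathrm{Spec_M}\mathbf A$ is the set of maximal proper filters; for $F\in\mathrm{Spec_M}\mathbf A$, $\mathbf A/F$ embeds uniquely into the standard Pavelka algebra $[0,1]$ and $x/F$ is identified with its image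 in $[0,1]$. $\mathbf A$ is semisimple if its MV-reduct is a subdirect product of simple MV-algebras. $f\leftrightarrows g$ means: $f,g$ monotone, $x\le f(y)$ iff $g(x)\le y$ for all $y\in A,x\in B$, and $\mathbf r\rightarrow f(y)=f(\mathbf r\rightarrow y)$ for all $y\in A$ and constants $\mathbf r$. For $R\colon I\times J\to[0,1]$: $f_R(x)(j)=\bigwedge_{i\in I}(R(i,j)\rightarrow x(i))$ for $x\in[0,1]^I$, with operations of $[0,1]$ applied componentwise. *)

theory Defs
  imports Complex_Main
begin

definition r_imp :: "real \<Rightarrow> real \<Rightarrow> real" where
  "r_imp a b = min 1 (1 - a + b)"

definition r_times :: "real \<Rightarrow> real \<Rightarrow> real" where
  "r_times a b = max 0 (a + b - 1)"

text \<open>Meet in the complete lattice [0,1] (the empty meet is the top element 1).\<close>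
definition inf01 :: "real set \<Rightarrow> real" where
  "inf01 S = (if S = {} then 1 else Inf S)"

definition f_R :: "'i set \<Rightarrow> ('i \<Rightarrow> 'j \<Rightarrow> real) \<Rightarrow> ('i \<Rightarrow> real) \<Rightarrow> 'j \<Rightarrow> real" where
  "f_R I R x j = inf01 ((\<lambda>i. r_imp (R i j) (x i)) ` I)"

record 'a pav =
  carrier :: "'a set"
  plus :: "'a \<Rightarrow> 'a \<Rightarrow> 'a"
  neg :: "'a \<Rightarrow> 'a"
  cst :: "rat \<Rightarrow> 'a"

definition mv_one :: "('a, 'b) pav_scheme \<Rightarrow> 'a" where
  "mv_one A = neg A (cst A 0)"

definition mv_times :: "('a, 'b) pav_scheme \<Rightarrow> 'a \<Rightarrow> 'a \<Rightarrow> 'a" where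
  "mv_times A x y = neg A (plus A (neg A x) (neg A y))"

definition mv_imp :: "('a, 'b) pav_scheme \<Rightarrow> 'a \<Rightarrow> 'a \<Rightarrow> 'a" where
  "mv_imp A x y = plus A (neg A x) y"

definition mv_le :: "('a, 'b) pav_scheme \<Rightarrow> 'a \<Rightarrow> 'a \<Rightarrow> bool" where
  "mv_le A x y \<longleftrightarrow> plus A (neg A x) y = mv_one A"

definition is_mv :: "('a, 'b) pav_scheme \<Rightarrow> bool" where
  "is_mv A \<longleftrightarrow>
     cst A 0 \<in> carrier A \<and>
     (\<forall>x\<in>carrier A. \<forall>y\<in>carrier A. plus A x y \<in> carrier A) \<and>
     (\<forall>x\<in>carrier A. neg A x \<in> carrier A) \<and>
     (\<forall>x\<in>carrier A. \<forall>y\<in>carrier A. \<forall>z\<in>carrier A.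
        plus A x (plus A y z) = plus A (plus A x y) z) \<and>
     (\<forall>x\<in>carrier A. \<forall>y\<in>carrier A. plus A x y = plus A y x) \<and>
     (\<forall>x\<in>carrier A. plus A x (cst A 0) = x) \<and>
     (\<forall>x\<in>carrier A. neg A (neg A x) = x) \<and>
     (\<forall>x\<in>carrier A. plus A x (neg A (cst A 0)) = neg A (cst A 0)) \<and>
     (\<forall>x\<in>carrier A. \<forall>y\<in>carrier A.
        plus A (neg A (plus A (neg A x) y)) y = plus A (neg A (plus A (neg A y) x)) x)"

definition is_pavelka :: "('a, 'b) pav_scheme \<Rightarrow> bool" where
  "is_pavelka A \<longleftrightarrow> is_mv A \<and>
     (\<forall>r. 0 \<le> r \<and> r \<le> 1 \<longrightarrow> cst A r \<in> carrier A) \<and>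
     (\<forall>r s. 0 \<le> r \<and> r \<le> 1 \<and> 0 \<le> s \<and> s \<le> 1 \<longrightarrow>
        plus A (cst A r) (cst A s) = cst A (min (r + s) 1)) \<and>
     (\<forall>r. 0 \<le> r \<and> r \<le> 1 \<longrightarrow> neg A (cst A r) = cst A (1 - r))"

definition mv_filter :: "('a, 'b) pav_scheme \<Rightarrow> 'a set \<Rightarrow> bool" where
  "mv_filter A F \<longleftrightarrow> F \<subseteq> carrier A \<and> mv_one A \<in> F \<and>
     (\<forall>x\<in>F. \<forall>y\<in>carrier A. mv_le A x y \<longrightarrow> y \<in> F) \<and>
     (\<forall>x\<in>F. \<forall>y\<in>F. mv_times A x y \<in> F)"

definition maximal_filter :: "('a, 'b) pav_scheme \<Rightarrow> 'a set \<Rightarrow> bool" where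
  "maximal_filter A F \<longleftrightarrow> mv_filter A F \<and> F \<noteq> carrier A \<and>
     (\<forall>G. mv_filter A G \<and> F \<subseteq> G \<and> G \<noteq> carrier A \<longrightarrow> G = F)"

definition spec_M :: "('a, 'b) pav_scheme \<Rightarrow> 'a set set" where
  "spec_M A = {F. maximal_filter A F}"

definition semisimple :: "('a, 'b) pav_scheme \<Rightarrow> bool" where
  "semisimple A \<longleftrightarrow> carrier A \<inter> \<Inter> (spec_M A) = {mv_one A}"

definition std_hom :: "('a, 'b) pav_scheme \<Rightarrow> ('a \<Rightarrow> real) \<Rightarrow> bool" where
  "std_hom A h \<longleftrightarrow>
     (\<forall>x\<in>carrier A. 0 \<le> h x \<and> h x \<le> 1) \<and>
     (\<forall>x\<in>carrier A. \<forall>y\<in>carrier A. h (plus A x y) = min (h x + h y) 1) \<and>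
     (\<forall>x\<in>carrier A. h (neg A x) = 1 - h x) \<and>
     (\<forall>r. 0 \<le> r \<and> r \<le> 1 \<longrightarrow> h (cst A r) = real_of_rat r)"

text \<open>x/F: image of x under the (unique) embedding of A/F into [0,1], i.e. the value at x
  of the unique homomorphism A \<rightarrow> [0,1] whose filter (preimage of 1) is F.\<close>
definition quot_val :: "('a, 'b) pav_scheme \<Rightarrow> 'a set \<Rightarrow> 'a \<Rightarrow> real" where
  "quot_val A F x = (THE v. \<exists>h. std_hom A h \<and> {y\<in>carrier A. h y = 1} = F \<and> v = h x)"

definition adjoint_pair ::
  "('a, 'c) pav_scheme \<Rightarrow> ('b, 'd) pav_scheme \<Rightarrow> ('a \<Rightarrow> 'b) \<Rightarrow> ('b \<Rightarrow> 'a) \<Rightarrow> bool" where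
  "adjoint_pair A B f g \<longleftrightarrow>
     (\<forall>y\<in>carrier A. f y \<in> carrier B) \<and> (\<forall>x\<in>carrier B. g x \<in> carrier A) \<and>
     (\<forall>y1\<in>carrier A. \<forall>y2\<in>carrier A. mv_le A y1 y2 \<longrightarrow> mv_le B (f y1) (f y2)) \<and>
     (\<forall>x1\<in>carrier B. \<forall>x2\<in>carrier B. mv_le B x1 x2 \<longrightarrow> mv_le A (g x1) (g x2)) \<and>
     (\<forall>y\<in>carrier A. \<forall>x\<in>carrier B. mv_le B x (f y) \<longleftrightarrow> mv_le A (g x) y) \<and>
     (\<forall>r. 0 \<le> r \<and> r \<le> 1 \<longrightarrow>
        (\<forall>y\<in>carrier A. mv_imp B (cst B r) (f y) = f (mv_imp A (cst A r) y)))"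

definition rel_R ::
  "('a, 'c) pav_scheme \<Rightarrow> ('b, 'd) pav_scheme \<Rightarrow> ('a \<Rightarrow> 'b) \<Rightarrow> 'a set \<Rightarrow> 'b set \<Rightarrow> real" where
  "rel_R A B f F G = inf01 ((\<lambda>a. r_imp (quot_val B G (f a)) (quot_val A F a)) ` carrier A)"

end

theory Submission imports Defs begin

lemma rat_between: "(a::real) < b \<Longrightarrow> \<exists>q. a < real_of_rat q \<and> real_of_rat q < b"
proof -
  assume "a < b"
  then obtain r where "r \<in> \<rat>" "a < r" "r < b" using Rats_dense_in_real by blast
  then show ?thesis by (metis Rats_cases)
qed

lemma rat_01: "0 \<le> (a::real) \<Longrightarrow> a < real_of_rat q \<Longrightarrow> real_of_rat q < b \<Longrightarrow> b \<le> 1 \<Longrightarrow> 0 \<le> q \<and> q \<le> 1"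
proof -
  assume a: "0 \<le> a" "a < real_of_rat q" "real_of_rat q < b" "b \<le> 1"
  then have "(0::real) \<le> real_of_rat q" "real_of_rat q \<le> (1::real)" by linarith+
  then show ?thesis by simp
qed

locale mv = fixes A :: "('a,'b) pav_scheme" assumes mv: "is_mv A"
begin

abbreviation "C \<equiv> carrier A"
abbreviation "pl \<equiv> plus A"
abbreviation "ng \<equiv> neg A"
abbreviation "zr \<equiv> cst A 0"
abbreviation "on \<equiv> mv_one A"
abbreviation "tm \<equiv> mv_times A"
abbreviation "im \<equiv> mv_imp A"
abbreviation "le \<equiv> mv_le A"

lemma zr_C[simp]: "zr \<in> C" using mv unfolding is_mv_def by blast
lemma pl_C[simp]: "x \<in> C \<Longrightarrow> y \<in> C \<Longrightarrow> pl x y \<in> C" using mv unfolding is_mv_def by blast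
lemma ng_C[simp]: "x \<in> C \<Longrightarrow> ng x \<in> C" using mv unfolding is_mv_def by blast
lemma on_def': "on = ng zr" by (simp add: mv_one_def)
lemma on_C[simp]: "on \<in> C" by (simp add: on_def')
lemma tm_C[simp]: "x \<in> C \<Longrightarrow> y \<in> C \<Longrightarrow> tm x y \<in> C" by (simp add: mv_times_def)
lemma im_C[simp]: "x \<in> C \<Longrightarrow> y \<in> C \<Longrightarrow> im x y \<in> C" by (simp add: mv_imp_def)
lemma pl_assoc: "x \<in> C \<Longrightarrow> y \<in> C \<Longrightarrow> z \<in> C \<Longrightarrow> pl (pl x y) z = pl x (pl y z)"
  using mv unfolding is_mv_def by metis
lemma pl_comm: "x \<in> C \<Longrightarrow> y \<in> C \<Longrightarrow> pl x y = pl y x"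
  using mv unfolding is_mv_def by metis
lemma pl_lcomm: "x \<in> C \<Longrightarrow> y \<in> C \<Longrightarrow> z \<in> C \<Longrightarrow> pl x (pl y z) = pl y (pl x z)"
  by (metis pl_assoc pl_comm)
lemmas pl_ac = pl_assoc pl_comm pl_lcomm
lemma pl_zr[simp]: "x \<in> C \<Longrightarrow> pl x zr = x" using mv unfolding is_mv_def by blast
lemma zr_pl[simp]: "x \<in> C \<Longrightarrow> pl zr x = x" by (metis pl_comm pl_zr zr_C)
lemma ng_ng[simp]: "x \<in> C \<Longrightarrow> ng (ng x) = x" using mv unfolding is_mv_def by blast
lemma pl_on[simp]: "x \<in> C \<Longrightarrow> pl x on = on" using mv unfolding is_mv_def mv_one_def by blast
lemma on_pl[simp]: "x \<in> C \<Longrightarrow> pl on x = on" by (metis pl_comm pl_on on_C)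
lemma ax9: "x \<in> C \<Longrightarrow> y \<in> C \<Longrightarrow> pl (ng (pl (ng x) y)) y = pl (ng (pl (ng y) x)) x"
  using mv unfolding is_mv_def by blast
lemma ng_on[simp]: "ng on = zr" by (simp add: on_def')
lemma ng_inj: "x \<in> C \<Longrightarrow> y \<in> C \<Longrightarrow> ng x = ng y \<longleftrightarrow> x = y" by (metis ng_ng)

lemma compl[simp]: "x \<in> C \<Longrightarrow> pl (ng x) x = on"
  using ax9[of x on] by simp
lemma compl2[simp]: "x \<in> C \<Longrightarrow> pl x (ng x) = on"
  by (metis compl pl_comm ng_C)
lemma compl3[simp]: "x \<in> C \<Longrightarrow> y \<in> C \<Longrightarrow> pl (ng x) (pl x y) = on"
  by (metis compl on_pl pl_assoc ng_C)
lemma compl4[simp]: "x \<in> C \<Longrightarrow> y \<in> C \<Longrightarrow> pl x (pl (ng x) y) = on"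
  by (metis compl2 on_pl pl_assoc ng_C)

lemma le_iff: "le x y \<longleftrightarrow> pl (ng x) y = on" by (simp add: mv_le_def)
lemma le_refl[simp]: "x \<in> C \<Longrightarrow> le x x" by (simp add: le_iff)
lemma le_antisym: "x \<in> C \<Longrightarrow> y \<in> C \<Longrightarrow> le x y \<Longrightarrow> le y x \<Longrightarrow> x = y"
  using ax9[of x y] by (simp add: le_iff)
lemma le_ex: "x \<in> C \<Longrightarrow> y \<in> C \<Longrightarrow> le x y \<longleftrightarrow> (\<exists>w\<in>C. y = pl x w)"
proof
  assume "x \<in> C" "y \<in> C" "le x y"
  then have "pl (ng (pl (ng y) x)) x = y" using ax9[of x y] by (simp add: le_iff)
  then show "\<exists>w\<in>C. y = pl x w" using \<open>x \<in> C\<close> \<open>y \<in> C\<close>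
    by (metis ng_C pl_C pl_comm)
next
  assume "x \<in> C" "y \<in> C" "\<exists>w\<in>C. y = pl x w"
  then show "le x y" by (auto simp: le_iff)
qed
lemma le_plI[simp]: "x \<in> C \<Longrightarrow> w \<in> C \<Longrightarrow> le x (pl x w)" using le_ex by auto
lemma le_plI2[simp]: "x \<in> C \<Longrightarrow> w \<in> C \<Longrightarrow> le x (pl w x)" using le_ex pl_comm by auto
lemma le_trans: "x \<in> C \<Longrightarrow> y \<in> C \<Longrightarrow> z \<in> C \<Longrightarrow> le x y \<Longrightarrow> le y z \<Longrightarrow> le x z"
  by (metis le_ex pl_C pl_assoc)
lemma le_pl_mono: "x \<in> C \<Longrightarrow> y \<in> C \<Longrightarrow> w \<in> C \<Longrightarrow> le x y \<Longrightarrow> le (pl x w) (pl y w)"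
proof -
  assume c: "x \<in> C" "y \<in> C" "w \<in> C" "le x y"
  then obtain v where v: "v \<in> C" "y = pl x v" using le_ex by blast
  then have "pl y w = pl (pl x w) v" using c by (simp add: pl_assoc pl_comm[of v w])
  then show ?thesis using c v le_plI by simp
qed
lemma le_pl_mono2: "x \<in> C \<Longrightarrow> y \<in> C \<Longrightarrow> w \<in> C \<Longrightarrow> le x y \<Longrightarrow> le (pl w x) (pl w y)"
  by (metis le_pl_mono pl_comm)
lemma le_ng: "x \<in> C \<Longrightarrow> y \<in> C \<Longrightarrow> le x y \<Longrightarrow> le (ng y) (ng x)"
  by (simp add: le_iff pl_comm)
lemma le_zr[simp]: "x \<in> C \<Longrightarrow> le zr x" by (simp add: le_iff on_def'[symmetric])
lemma le_on[simp]: "x \<in> C \<Longrightarrow> le x on" by (simp add: le_iff)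

lemma ng_tm: "x \<in> C \<Longrightarrow> y \<in> C \<Longrightarrow> ng (tm x y) = pl (ng x) (ng y)" by (simp add: mv_times_def)
lemma tm_comm: "x \<in> C \<Longrightarrow> y \<in> C \<Longrightarrow> tm x y = tm y x" by (simp add: mv_times_def pl_comm)
lemma tm_assoc: "x \<in> C \<Longrightarrow> y \<in> C \<Longrightarrow> z \<in> C \<Longrightarrow> tm (tm x y) z = tm x (tm y z)"
  by (simp add: mv_times_def pl_assoc)
lemma tm_lcomm: "x \<in> C \<Longrightarrow> y \<in> C \<Longrightarrow> z \<in> C \<Longrightarrow> tm x (tm y z) = tm y (tm x z)"
  by (simp add: mv_times_def pl_lcomm)
lemmas tm_ac = tm_assoc tm_comm tm_lcomm
lemma tm_on[simp]: "x \<in> C \<Longrightarrow> tm x on = x" by (simp add: mv_times_def)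
lemma on_tm[simp]: "x \<in> C \<Longrightarrow> tm on x = x" by (simp add: mv_times_def)
lemma le_tm_mono: "x \<in> C \<Longrightarrow> y \<in> C \<Longrightarrow> w \<in> C \<Longrightarrow> le x y \<Longrightarrow> le (tm x w) (tm y w)"
  unfolding mv_times_def by (intro le_ng le_pl_mono) (auto intro: le_ng)
lemma le_tm_mono2: "x \<in> C \<Longrightarrow> y \<in> C \<Longrightarrow> w \<in> C \<Longrightarrow> le x y \<Longrightarrow> le (tm w x) (tm w y)"
  using le_tm_mono[of x y w] tm_comm[of w x] tm_comm[of w y] by simp
lemma le_tm_mono12: "x \<in> C \<Longrightarrow> y \<in> C \<Longrightarrow> u \<in> C \<Longrightarrow> v \<in> C \<Longrightarrow> le x y \<Longrightarrow> le u v \<Longrightarrow> le (tm x u) (tm y v)"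
  using le_tm_mono[of x y u] le_tm_mono2[of u v y] le_trans[of "tm x u" "tm y u" "tm y v"] by simp
lemma le_pl_mono12: "x \<in> C \<Longrightarrow> y \<in> C \<Longrightarrow> u \<in> C \<Longrightarrow> v \<in> C \<Longrightarrow> le x y \<Longrightarrow> le u v \<Longrightarrow> le (pl x u) (pl y v)"
  using le_pl_mono[of x y u] le_pl_mono2[of u v y] le_trans[of "pl x u" "pl y u" "pl y v"] by simp

lemma resid: "x \<in> C \<Longrightarrow> y \<in> C \<Longrightarrow> w \<in> C \<Longrightarrow> le (tm x y) w \<longleftrightarrow> le x (im y w)"
  by (simp add: le_iff mv_times_def mv_imp_def pl_assoc)
lemma tm_zr_iff: "x \<in> C \<Longrightarrow> y \<in> C \<Longrightarrow> tm x y = zr \<longleftrightarrow> le x (ng y)"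
proof -
  assume c: "x \<in> C" "y \<in> C"
  have "tm x y = zr \<longleftrightarrow> ng (tm x y) = ng zr" using c ng_inj[of "tm x y" zr] by simp
  also have "\<dots> \<longleftrightarrow> pl (ng x) (ng y) = on" using c by (simp add: ng_tm on_def')
  finally show ?thesis by (simp add: le_iff)
qed
lemma le_zr_iff: "x \<in> C \<Longrightarrow> le x zr \<longleftrightarrow> x = zr"
  using le_antisym[of x zr] by auto

definition mt where "mt x y = tm x (pl (ng x) y)"
lemma mt_C[simp]: "x \<in> C \<Longrightarrow> y \<in> C \<Longrightarrow> mt x y \<in> C" by (simp add: mt_def)
lemma L1: "a \<in> C \<Longrightarrow> b \<in> C \<Longrightarrow> pl (tm a b) (ng a) = pl (ng (pl a b)) b"
  unfolding mv_times_def using ax9[of b "ng a"] by (simp add: pl_comm)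
lemma L3: "x \<in> C \<Longrightarrow> y \<in> C \<Longrightarrow> mt x y = mt y x"
  unfolding mt_def mv_times_def using ax9[of "ng x" "ng y"] by (simp add: pl_comm)
lemma L2: "x \<in> C \<Longrightarrow> y \<in> C \<Longrightarrow> pl (ng y) (mt y x) = pl (ng y) x"
proof -
  assume c: "x \<in> C" "y \<in> C"
  have "pl (tm y (pl (ng y) x)) (ng y) = pl (ng (pl y (pl (ng y) x))) (pl (ng y) x)"
    using L1[of y "pl (ng y) x"] c by simp
  also have "\<dots> = pl (ng y) x" using c by simp
  finally show ?thesis unfolding mt_def using c pl_comm[of "ng y" "tm y (pl (ng y) x)"] by simp
qed
lemma L4: "x \<in> C \<Longrightarrow> y \<in> C \<Longrightarrow> le (mt x y) x"
  unfolding mt_def le_iff by (simp add: ng_tm pl_ac)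
lemma L4': "x \<in> C \<Longrightarrow> y \<in> C \<Longrightarrow> le (mt x y) y"
  using L3 L4 by metis
lemma L5: "x \<in> C \<Longrightarrow> y \<in> C \<Longrightarrow> pl (ng (pl (ng x) y)) (mt x y) = x"
proof -
  assume xy: "x \<in> C" "y \<in> C"
  have "pl (ng (pl (ng x) (mt x y))) (mt x y) = pl (ng (pl (ng (mt x y)) x)) x"
    using ax9[of x "mt x y"] xy by simp
  also have "\<dots> = x" using L4[OF xy] xy by (simp add: le_iff)
  finally show ?thesis using L2[of y x] xy by simp
qed
lemma L6: "x \<in> C \<Longrightarrow> y \<in> C \<Longrightarrow> pl (ng (pl (ng x) y)) (pl (ng y) x) = pl (ng y) x"
proof -
  assume xy: "x \<in> C" "y \<in> C"
  have e: "pl (ng y) x = pl (ng y) (mt x y)" using L2[of x y] L3[of x y] xy by simp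
  have "pl (ng (pl (ng x) y)) (pl (ng y) (mt x y)) = pl (ng y) (pl (ng (pl (ng x) y)) (mt x y))"
    using xy by (simp add: pl_lcomm)
  also have "\<dots> = pl (ng y) x" using L5 xy by simp
  finally show ?thesis using e by simp
qed

lemma tm_im_le: "a \<in> C \<Longrightarrow> b \<in> C \<Longrightarrow> le (tm a (im a b)) b"
  using L4'[of a b] by (simp add: mt_def mv_imp_def)
lemma tm_im_le': "a \<in> C \<Longrightarrow> b \<in> C \<Longrightarrow> le (tm (im a b) a) b"
  using tm_im_le tm_comm by (metis im_C)

lemma Lw: "x \<in> C \<Longrightarrow> y \<in> C \<Longrightarrow> w \<in> C \<Longrightarrow> le (tm x (pl y w)) (pl (tm x y) w)"
proof -
  assume c: "x \<in> C" "y \<in> C" "w \<in> C"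
  have e1: "pl (tm x y) (ng x) = pl (ng (pl x y)) y" using L1 c by simp
  have e2: "pl (ng (pl y w)) y = pl (tm w y) (ng w)" using L1[of w y] c by (simp add: pl_comm)
  have "pl (ng (tm x (pl y w))) (pl (tm x y) w)
      = pl (pl (tm x y) (ng x)) (pl (ng (pl y w)) w)" using c by (simp add: ng_tm pl_ac)
  also have "\<dots> = pl (ng (pl x y)) (pl (pl (ng (pl y w)) y) w)" using c e1 by (simp add: pl_ac)
  also have "\<dots> = on" using c e2 by (simp add: pl_ac)
  finally show ?thesis by (simp add: le_iff)
qed

lemma im_trans: "a \<in> C \<Longrightarrow> b \<in> C \<Longrightarrow> d \<in> C \<Longrightarrow> le (tm (im a b) (im b d)) (im a d)"
proof -
  assume c: "a \<in> C" "b \<in> C" "d \<in> C"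
  have "le (tm (tm (im a b) (im b d)) a) (tm b (im b d))"
    using c tm_im_le'[of a b] le_tm_mono[of "tm (im a b) a" b "im b d"] tm_ac(1)[of "im a b" "im b d" a]
       tm_comm[of "im b d" a] tm_ac(1)[of "im a b" a "im b d"] by simp
  moreover have "le (tm b (im b d)) d" using c tm_im_le by simp
  ultimately have "le (tm (tm (im a b) (im b d)) a) d" using c
    le_trans[of "tm (tm (im a b) (im b d)) a" "tm b (im b d)" d] by simp
  then show ?thesis using c resid by simp
qed

lemma M1: "a \<in> C \<Longrightarrow> b \<in> C \<Longrightarrow> c \<in> C \<Longrightarrow> d \<in> C \<Longrightarrow>
   le (tm (im a b) (im c d)) (im (pl a c) (pl b d))"
proof -
  assume cc: "a \<in> C" "b \<in> C" "c \<in> C" "d \<in> C"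
  have "tm (tm (im a b) (im c d)) (pl a c) = tm (im c d) (tm (im a b) (pl a c))"
    using cc tm_comm[of "im a b" "im c d"] tm_assoc[of "im c d" "im a b" "pl a c"] by simp
  moreover have "le (tm (im a b) (pl a c)) (pl (tm (im a b) a) c)" using Lw cc by simp
  moreover have "le (pl (tm (im a b) a) c) (pl c b)" using cc tm_im_le'[of a b]
    le_pl_mono[of "tm (im a b) a" b c] pl_comm[of b c] by simp
  moreover have "le (tm (im c d) (pl c b)) (pl (tm (im c d) c) b)" using Lw cc by simp
  moreover have "le (pl (tm (im c d) c) b) (pl b d)" using cc tm_im_le'[of c d]
    le_pl_mono[of "tm (im c d) c" d b] pl_comm[of d b] by simp
  ultimately have "le (tm (tm (im a b) (im c d)) (pl a c)) (pl b d)" using cc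
    le_trans[of "tm (im a b) (pl a c)" "pl (tm (im a b) a) c" "pl c b"]
    le_tm_mono2[of "tm (im a b) (pl a c)" "pl c b" "im c d"]
    le_trans[of "tm (im c d) (tm (im a b) (pl a c))" "tm (im c d) (pl c b)" "pl (tm (im c d) c) b"]
    le_trans[of "tm (im c d) (tm (im a b) (pl a c))" "pl (tm (im c d) c) b" "pl b d"]
    by simp
  then show ?thesis using cc resid by simp
qed

lemma M2: "a \<in> C \<Longrightarrow> b \<in> C \<Longrightarrow> c \<in> C \<Longrightarrow> d \<in> C \<Longrightarrow>
   le (tm (im a b) (im c d)) (im (tm a c) (tm b d))"
proof -
  assume cc: "a \<in> C" "b \<in> C" "c \<in> C" "d \<in> C"
  have "tm (tm (im a b) (im c d)) (tm a c) = tm (im a b) (tm (im c d) (tm a c))"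
    using cc by (simp add: tm_assoc)
  also have "\<dots> = tm (im a b) (tm a (tm (im c d) c))" using cc tm_lcomm[of "im c d" a c] by simp
  also have "\<dots> = tm (tm (im a b) a) (tm (im c d) c)" using cc by (simp add: tm_assoc)
  finally have "tm (tm (im a b) (im c d)) (tm a c) = tm (tm (im a b) a) (tm (im c d) c)" .
  moreover have "le (tm (tm (im a b) a) (tm (im c d) c)) (tm b d)"
    using cc tm_im_le' by (simp add: le_tm_mono12)
  ultimately have "le (tm (tm (im a b) (im c d)) (tm a c)) (tm b d)" by simp
  then show ?thesis using cc resid[of "tm (im a b) (im c d)" "tm a c" "tm b d"] by simp
qed

fun pw where "pw x 0 = on" | "pw x (Suc n) = tm x (pw x n)"
lemma pw_C[simp]: "x \<in> C \<Longrightarrow> pw x n \<in> C" by (induction n) auto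
lemma pw_add: "x \<in> C \<Longrightarrow> pw x (n + m) = tm (pw x n) (pw x m)"
  by (induction n) (auto simp: tm_assoc)
lemma pw_im: "a \<in> C \<Longrightarrow> b \<in> C \<Longrightarrow> le (pw (im a b) n) (im (pw a n) (pw b n))"
proof (induction n)
  case 0
  have "im on on = on" by (simp add: mv_imp_def)
  then show ?case by simp
next
  case (Suc n)
  have c: "im a b \<in> C" "pw (im a b) n \<in> C" "im (pw a n) (pw b n) \<in> C" using Suc by auto
  have 1: "le (tm (im a b) (pw (im a b) n)) (tm (im a b) (im (pw a n) (pw b n)))"
    using le_tm_mono2[OF c(2) c(3) c(1)] Suc by simp
  have 2: "le (tm (im a b) (im (pw a n) (pw b n))) (im (tm a (pw a n)) (tm b (pw b n)))"
    using M2[of a b "pw a n" "pw b n"] Suc by simp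
  show ?case using le_trans[OF _ _ _ 1 2] Suc by simp
qed

lemma absorb_pw: "a \<in> C \<Longrightarrow> c \<in> C \<Longrightarrow> pl (ng a) c = c \<Longrightarrow> pl (ng (pw a n)) c = c"
proof (induction n)
  case 0 then show ?case by simp
next
  case (Suc n)
  then have "pl (ng (pw a (Suc n))) c = pl (ng (pw a n)) (pl (ng a) c)"
    by (simp add: ng_tm pl_assoc pl_comm[of "ng a" "ng (pw a n)"])
  then show ?case using Suc by simp
qed

lemma orth: "p \<in> C \<Longrightarrow> c \<in> C \<Longrightarrow> pl p c = c \<Longrightarrow> pl (ng p) (ng c) = ng p"
proof -
  assume h: "p \<in> C" "c \<in> C" "pl p c = c"
  have "pl c p = c" using h pl_comm[of p c] by simp
  then have "mt (ng c) p = zr" using h unfolding mt_def mv_times_def by simp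
  then have "mt p (ng c) = zr" using L3[of p "ng c"] h by simp
  then have "tm (pl (ng p) (ng c)) p = zr" unfolding mt_def using h tm_comm[of p "pl (ng p) (ng c)"] by simp
  then have "le (pl (ng p) (ng c)) (ng p)" using h tm_zr_iff by simp
  moreover have "le (ng p) (pl (ng p) (ng c))" using h by simp
  ultimately show ?thesis using h le_antisym[of "pl (ng p) (ng c)" "ng p"] by simp
qed

lemma prelin_core: "x \<in> C \<Longrightarrow> y \<in> C \<Longrightarrow> tm (ng (pw (im x y) n)) (ng (pw (im y x) m)) = zr"
proof -
  assume c: "x \<in> C" "y \<in> C"
  define a where "a = im x y"
  define b where "b = im y x"
  have ab: "a \<in> C" "b \<in> C" using c by (auto simp: a_def b_def)
  have "pl (ng a) b = b" using L6 c by (simp add: a_def b_def mv_imp_def)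
  then have "pl (ng (pw a n)) b = b" using absorb_pw ab by simp
  then have "pl (pw a n) (ng b) = pw a n" using orth[of "ng (pw a n)" b] ab by simp
  then have "pl (ng b) (pw a n) = pw a n" using ab pl_comm[of "ng b" "pw a n"] by simp
  then have "pl (ng (pw b m)) (pw a n) = pw a n" using absorb_pw ab by simp
  then have "pl (pw b m) (ng (pw a n)) = pw b m" using orth[of "ng (pw b m)" "pw a n"] ab by simp
  moreover have "le (ng (pw a n)) (pl (pw b m) (ng (pw a n)))" using ab by simp
  ultimately have "le (ng (pw a n)) (pw b m)" by simp
  then show ?thesis using ab tm_zr_iff by (simp add: a_def b_def)
qed


lemma tm_swap: "a \<in> C \<Longrightarrow> b \<in> C \<Longrightarrow> c \<in> C \<Longrightarrow> d \<in> C \<Longrightarrow>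
  tm (tm a b) (tm c d) = tm (tm a c) (tm b d)"
  using tm_assoc[of a b "tm c d"] tm_lcomm[of b c d] tm_assoc[of a c "tm b d"] by simp

lemma im_zr: "y \<in> C \<Longrightarrow> im y zr = ng y" by (simp add: mv_imp_def)

end

locale mfil = mv + fixes F assumes maxF: "maximal_filter A F"
begin

lemma mfF: "mv_filter A F" using maxF unfolding maximal_filter_def by (elim conjE)
lemma F_ne: "F \<noteq> C" using maxF unfolding maximal_filter_def by (elim conjE)
lemma F_max: "mv_filter A G \<Longrightarrow> F \<subseteq> G \<Longrightarrow> G \<noteq> C \<Longrightarrow> G = F"
  using maxF unfolding maximal_filter_def by (elim conjE) (drule spec[of _ G], simp)
lemma F_sub: "F \<subseteq> C" using mfF unfolding mv_filter_def by (elim conjE)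
lemma F_C: "x \<in> F \<Longrightarrow> x \<in> C" using F_sub by (rule subsetD)
lemma on_F[simp]: "on \<in> F" using mfF unfolding mv_filter_def by (elim conjE)
lemma F_up: "x \<in> F \<Longrightarrow> y \<in> C \<Longrightarrow> le x y \<Longrightarrow> y \<in> F"
  using mfF unfolding mv_filter_def by (elim conjE) (drule bspec[of _ _ x], simp, drule bspec[of _ _ y], simp_all)
lemma F_tm: "x \<in> F \<Longrightarrow> y \<in> F \<Longrightarrow> tm x y \<in> F"
  using mfF unfolding mv_filter_def by (elim conjE) simp
lemma zr_notin: "zr \<notin> F"
proof
  assume "zr \<in> F"
  then have "C \<subseteq> F" using F_up[of zr] le_zr by auto
  then show False using F_ne F_sub by blast
qed
lemma pw_F: "x \<in> F \<Longrightarrow> pw x n \<in> F"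
  by (induction n) (simp_all add: F_tm)

lemma simple: assumes a: "a \<in> C" "a \<notin> F" shows "\<exists>n. ng (pw a n) \<in> F"
proof -
  define G where "G = {y \<in> C. \<exists>f\<in>F. \<exists>n. le (tm f (pw a n)) y}"
  have GC: "G \<subseteq> C" by (auto simp: G_def)
  have onG: "on \<in> G" unfolding G_def using a by (auto intro!: bexI[of _ on] exI[of _ 0])
  have upG: "\<forall>x\<in>G. \<forall>y\<in>C. le x y \<longrightarrow> y \<in> G"
  proof (intro ballI impI)
    fix x y assume "x \<in> G" "y \<in> C" "le x y"
    then obtain f n where "f \<in> F" "le (tm f (pw a n)) x" "x \<in> C" by (auto simp: G_def)
    then have "le (tm f (pw a n)) y" using le_trans[of "tm f (pw a n)" x y] \<open>y \<in> C\<close> \<open>le x y\<close> a F_C by simp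
    then show "y \<in> G" using \<open>f \<in> F\<close> \<open>y \<in> C\<close> by (auto simp: G_def)
  qed
  have tmG: "\<forall>x\<in>G. \<forall>y\<in>G. tm x y \<in> G"
  proof (intro ballI)
    fix x y assume "x \<in> G" "y \<in> G"
    then obtain f n g m where fg: "f \<in> F" "le (tm f (pw a n)) x" "x \<in> C" "g \<in> F" "le (tm g (pw a m)) y" "y \<in> C"
      by (auto simp: G_def)
    have fgC: "f \<in> C" "g \<in> C" using fg F_C by auto
    have "tm (tm f g) (pw a (n + m)) = tm (tm f (pw a n)) (tm g (pw a m))"
      using tm_swap[of f g "pw a n" "pw a m"] fgC a pw_add by simp
    moreover have "le (tm (tm f (pw a n)) (tm g (pw a m))) (tm x y)"
      using le_tm_mono12 fg fgC a by simp
    ultimately have "le (tm (tm f g) (pw a (n + m))) (tm x y)" by simp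
    moreover have "tm f g \<in> F" using fg F_tm by simp
    ultimately show "tm x y \<in> G" using fg unfolding G_def by auto
  qed
  have filt: "mv_filter A G" unfolding mv_filter_def using GC onG upG tmG by blast
  have FG: "F \<subseteq> G"
  proof
    fix f assume "f \<in> F"
    then have "le (tm f (pw a 0)) f" using F_C by simp
    then show "f \<in> G" using \<open>f \<in> F\<close> F_C unfolding G_def by blast
  qed
  have aG: "a \<in> G"
  proof -
    have "le (tm on (pw a 1)) a" using a by simp
    then show ?thesis using a unfolding G_def by (auto intro!: bexI[of _ on] exI[of _ 1])
  qed
  have "G = C" using F_max[OF filt FG] aG a by blast
  then have "zr \<in> G" by simp
  then obtain f n where f: "f \<in> F" "le (tm f (pw a n)) zr" by (auto simp: G_def)
  then have "tm f (pw a n) = zr" using le_zr_iff F_C a by simp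
  then have "le f (ng (pw a n))" using tm_zr_iff F_C f a by simp
  then have "ng (pw a n) \<in> F" using F_up[of f "ng (pw a n)"] f a by simp
  then show ?thesis by blast
qed

lemma linear: assumes "x \<in> C" "y \<in> C" shows "im x y \<in> F \<or> im y x \<in> F"
proof (rule ccontr)
  assume "\<not> (im x y \<in> F \<or> im y x \<in> F)"
  then have "im x y \<notin> F" "im y x \<notin> F" by auto
  then obtain n m where "ng (pw (im x y) n) \<in> F" "ng (pw (im y x) m) \<in> F"
    using simple[of "im x y"] simple[of "im y x"] assms by auto
  then have "tm (ng (pw (im x y) n)) (ng (pw (im y x) m)) \<in> F" using F_tm by simp
  then show False using prelin_core assms zr_notin by simp
qed

end

locale pmv = mv + assumes pav: "is_pavelka A"
begin
abbreviation "cc \<equiv> cst A"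
lemma c_C[simp]: "0 \<le> r \<Longrightarrow> r \<le> 1 \<Longrightarrow> cc r \<in> C"
  using pav unfolding is_pavelka_def by blast
lemma c_pl: "0 \<le> r \<Longrightarrow> r \<le> 1 \<Longrightarrow> 0 \<le> s \<Longrightarrow> s \<le> 1 \<Longrightarrow> pl (cc r) (cc s) = cc (min (r + s) 1)"
  using pav unfolding is_pavelka_def by blast
lemma c_ng: "0 \<le> r \<Longrightarrow> r \<le> 1 \<Longrightarrow> ng (cc r) = cc (1 - r)"
  using pav unfolding is_pavelka_def by blast
lemma on_c: "on = cc 1" using c_ng[of 0] by (simp add: on_def')
lemma c_tm: "0 \<le> r \<Longrightarrow> r \<le> 1 \<Longrightarrow> 0 \<le> s \<Longrightarrow> s \<le> 1 \<Longrightarrow> tm (cc r) (cc s) = cc (max 0 (r + s - 1))"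
proof -
  assume a: "0 \<le> r" "r \<le> 1" "0 \<le> s" "s \<le> 1"
  have "tm (cc r) (cc s) = ng (cc (min (1 - r + (1 - s)) 1))"
    unfolding mv_times_def using a by (simp add: c_ng c_pl)
  also have "\<dots> = cc (1 - min (1 - r + (1 - s)) 1)" using a by (simp add: c_ng)
  also have "1 - min (1 - r + (1 - s)) 1 = max 0 (r + s - 1)" by (simp add: min_def max_def)
  finally show ?thesis .
qed
lemma c_im: "0 \<le> r \<Longrightarrow> r \<le> 1 \<Longrightarrow> 0 \<le> s \<Longrightarrow> s \<le> 1 \<Longrightarrow> im (cc r) (cc s) = cc (min (1 - r + s) 1)"
  unfolding mv_imp_def by (simp add: c_ng c_pl)
lemma c_le: "0 \<le> r \<Longrightarrow> r \<le> s \<Longrightarrow> s \<le> 1 \<Longrightarrow> le (cc r) (cc s)"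
  unfolding le_iff using c_im[of r s] by (simp add: mv_imp_def on_c min_def)
lemma c_pw: "0 \<le> r \<Longrightarrow> r \<le> 1 \<Longrightarrow> pw (cc r) n = cc (max 0 (1 - of_nat n * (1 - r)))"
proof (induction n)
  case 0 then show ?case by (simp add: on_c)
next
  case (Suc n)
  define t where "t = max 0 (1 - of_nat n * (1 - r))"
  have t: "0 \<le> t" "t \<le> 1" using Suc by (auto simp: t_def)
  have "pw (cc r) (Suc n) = cc (max 0 (r + t - 1))" using Suc t c_tm by (simp add: t_def)
  also have "max 0 (r + t - 1) = max 0 (1 - of_nat (Suc n) * (1 - r))"
    using Suc unfolding t_def by (auto simp: max_def algebra_simps)
  finally show ?case .
qed
end

locale pmf = pmv + mfil
begin

lemma c_F: assumes "0 \<le> r" "r \<le> 1" "cc r \<in> F" shows "r = 1"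
proof (rule ccontr)
  assume "r \<noteq> 1"
  then have "0 < 1 - r" using assms by simp
  then obtain n where n: "1 < of_nat n * (1 - r)" using ex_less_of_nat_mult by blast
  have "pw (cc r) n \<in> F" using pw_F assms by simp
  moreover have "max 0 (1 - of_nat n * (1 - r)) = 0" using n by simp
  ultimately have "zr \<in> F" using c_pw assms by simp
  then show False using zr_notin by simp
qed

definition T where "T r x \<longleftrightarrow> im (cc r) x \<in> F"
definition B where "B r x \<longleftrightarrow> im x (cc r) \<in> F"
definition Ls where "Ls x = {real_of_rat r | r. 0 \<le> r \<and> r \<le> 1 \<and> T r x}"
definition h where "h x = Sup (Ls x)"

lemma T0: "x \<in> C \<Longrightarrow> T 0 x" unfolding T_def mv_imp_def by (simp add: on_def'[symmetric])
lemma T1: "x \<in> F \<Longrightarrow> T 1 x" unfolding T_def mv_imp_def using F_C by (simp add: on_c[symmetric])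
lemma B1: "x \<in> C \<Longrightarrow> B 1 x" unfolding B_def mv_imp_def by (simp add: on_c[symmetric])
lemma T_mono: "0 \<le> r \<Longrightarrow> r \<le> s \<Longrightarrow> s \<le> 1 \<Longrightarrow> x \<in> C \<Longrightarrow> T s x \<Longrightarrow> T r x"
  unfolding T_def mv_imp_def
  using F_up le_pl_mono[of "ng (cc s)" "ng (cc r)" x] c_le[of "1 - s" "1 - r"] c_ng by simp
lemma B_mono: "0 \<le> r \<Longrightarrow> r \<le> s \<Longrightarrow> s \<le> 1 \<Longrightarrow> x \<in> C \<Longrightarrow> B r x \<Longrightarrow> B s x"
  unfolding B_def mv_imp_def
  using F_up le_pl_mono2[of "cc r" "cc s" "ng x"] c_le[of r s] by simp
lemma TB: assumes "0 \<le> r" "r \<le> 1" "0 \<le> s" "s \<le> 1" "x \<in> C" "T r x" "B s x" shows "r \<le> s"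
proof -
  have "tm (im (cc r) x) (im x (cc s)) \<in> F" using assms F_tm unfolding T_def B_def by simp
  then have "im (cc r) (cc s) \<in> F" using F_up im_trans[of "cc r" x "cc s"] assms by simp
  then have "cc (min (1 - r + s) 1) \<in> F" using c_im assms by simp
  then have "min (1 - r + s) 1 = 1" using c_F[of "min (1 - r + s) 1"] assms by simp
  then show ?thesis by (simp add: min_def split: if_splits)
qed
lemma lin: "x \<in> C \<Longrightarrow> 0 \<le> r \<Longrightarrow> r \<le> 1 \<Longrightarrow> T r x \<or> B r x"
  unfolding T_def B_def using linear[of "cc r" x] by simp

lemma Ls_ne: "x \<in> C \<Longrightarrow> real_of_rat 0 \<in> Ls x" unfolding Ls_def using T0 by auto
lemma Ls_bdd: "bdd_above (Ls x)" unfolding Ls_def bdd_above_def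
  by (rule exI[of _ 1]) (auto simp: of_rat_less_eq[where 'a=real, of _ 1, simplified])
lemma Ls_le1: "y \<in> Ls x \<Longrightarrow> y \<le> 1" unfolding Ls_def
  by (auto simp: of_rat_less_eq[where 'a=real, of _ 1, simplified])

lemma h_T: "x \<in> C \<Longrightarrow> 0 \<le> r \<Longrightarrow> r \<le> 1 \<Longrightarrow> T r x \<Longrightarrow> real_of_rat r \<le> h x"
  unfolding h_def by (rule cSup_upper[OF _ Ls_bdd]) (auto simp: Ls_def)
lemma h_B: "x \<in> C \<Longrightarrow> 0 \<le> r \<Longrightarrow> r \<le> 1 \<Longrightarrow> B r x \<Longrightarrow> h x \<le> real_of_rat r"
  unfolding h_def
proof (rule cSup_least)
  assume "x \<in> C" "0 \<le> r" "r \<le> 1" "B r x"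
  then show "Ls x \<noteq> {}" using Ls_ne by blast
  fix y assume "y \<in> Ls x"
  then obtain s where "y = real_of_rat s" "0 \<le> s" "s \<le> 1" "T s x" unfolding Ls_def by blast
  then show "y \<le> real_of_rat r" using TB[of s r x] \<open>x \<in> C\<close> \<open>0 \<le> r\<close> \<open>r \<le> 1\<close> \<open>B r x\<close>
    by (simp add: of_rat_less_eq)
qed
lemma h_range: "x \<in> C \<Longrightarrow> 0 \<le> h x \<and> h x \<le> 1"
  using h_T[of x 0] T0 B1 h_B[of x 1] by simp
lemma lt_h_T: assumes "x \<in> C" "0 \<le> r" "r \<le> 1" "real_of_rat r < h x" shows "T r x"
proof -
  have "\<exists>y\<in>Ls x. real_of_rat r < y" using assms less_cSup_iff[OF _ Ls_bdd, of x] Ls_ne[of x]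
    unfolding h_def by blast
  then obtain s where "real_of_rat r < real_of_rat s" "0 \<le> s" "s \<le> 1" "T s x" unfolding Ls_def by blast
  then show ?thesis using T_mono[of r s x] assms by (simp add: of_rat_less)
qed
lemma gt_h_B: assumes "x \<in> C" "0 \<le> r" "r \<le> 1" "h x < real_of_rat r" shows "B r x"
  using lin[of x r] h_T[of x r] assms by auto


lemma T_near: assumes "x \<in> C" "0 < e" shows "\<exists>s. 0 \<le> s \<and> s \<le> 1 \<and> T s x \<and> h x - e < real_of_rat s"
proof (cases "h x - e < 0")
  case True then show ?thesis using T0 assms by (intro exI[of _ 0]) simp
next
  case False
  then obtain q where q: "h x - e < real_of_rat q" "real_of_rat q < h x" using rat_between[of "h x - e" "h x"] assms by auto
  then have "0 \<le> q \<and> q \<le> 1" using rat_01[of "h x - e" q "h x"] h_range assms False by simp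
  then show ?thesis using lt_h_T q assms by blast
qed

lemma B_near: assumes "x \<in> C" "0 < e" shows "\<exists>s. 0 \<le> s \<and> s \<le> 1 \<and> B s x \<and> real_of_rat s < h x + e"
proof (cases "1 < h x + e")
  case True then show ?thesis using B1 assms by (intro exI[of _ 1]) simp
next
  case False
  then obtain q where q: "h x < real_of_rat q" "real_of_rat q < h x + e" using rat_between[of "h x" "h x + e"] assms by auto
  then have "0 \<le> q \<and> q \<le> 1" using rat_01[of "h x" q "h x + e"] h_range assms False by simp
  then show ?thesis using gt_h_B q assms by blast
qed

lemma T_ng: "x \<in> C \<Longrightarrow> 0 \<le> r \<Longrightarrow> r \<le> 1 \<Longrightarrow> T r (ng x) \<longleftrightarrow> B (1 - r) x"
  unfolding T_def B_def mv_imp_def using c_ng[of r] pl_comm[of "cc (1 - r)" "ng x"] by simp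
lemma B_ng: "x \<in> C \<Longrightarrow> 0 \<le> r \<Longrightarrow> r \<le> 1 \<Longrightarrow> B r (ng x) \<longleftrightarrow> T (1 - r) x"
  unfolding T_def B_def mv_imp_def using c_ng[of "1 - r"] pl_comm[of x "cc r"] by simp

lemma h_ng: assumes x: "x \<in> C" shows "h (ng x) = 1 - h x"
proof (rule ccontr)
  assume ne: "h (ng x) \<noteq> 1 - h x"
  have r1: "0 \<le> h x" "h x \<le> 1" "0 \<le> h (ng x)" "h (ng x) \<le> 1" using h_range x by auto
  show False
  proof (cases "h (ng x) < 1 - h x")
    case True
    then obtain q where q: "h (ng x) < real_of_rat q" "real_of_rat q < 1 - h x" using rat_between by blast
    then have q01: "0 \<le> q" "q \<le> 1" using rat_01[of "h (ng x)" q "1 - h x"] r1 by auto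
    then have "B q (ng x)" using gt_h_B[of "ng x" q] q x by simp
    then have "T (1 - q) x" using B_ng x q01 by simp
    then have "real_of_rat (1 - q) \<le> h x" using h_T[of x "1 - q"] x q01 by simp
    then show False using q by (simp add: of_rat_diff)
  next
    case False
    then have "1 - h x < h (ng x)" using ne by simp
    then obtain q where q: "1 - h x < real_of_rat q" "real_of_rat q < h (ng x)" using rat_between by blast
    then have q01: "0 \<le> q" "q \<le> 1" using rat_01[of "1 - h x" q "h (ng x)"] r1 by auto
    then have "T q (ng x)" using lt_h_T[of "ng x" q] q x by simp
    then have "B (1 - q) x" using T_ng x q01 by simp
    then have "h x \<le> real_of_rat (1 - q)" using h_B[of x "1 - q"] x q01 by simp
    then show False using q by (simp add: of_rat_diff)
  qed
qed

lemma h_c: "0 \<le> r \<Longrightarrow> r \<le> 1 \<Longrightarrow> h (cc r) = real_of_rat r"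
proof -
  assume r: "0 \<le> r" "r \<le> 1"
  have "im (cc r) (cc r) = on" using r by (simp add: mv_imp_def)
  then have "T r (cc r)" "B r (cc r)" unfolding T_def B_def by simp_all
  then show ?thesis using h_T[of "cc r" r] h_B[of "cc r" r] r by simp
qed

lemma T_pl: assumes "x \<in> C" "y \<in> C" "0 \<le> s" "s \<le> 1" "0 \<le> t" "t \<le> 1" "T s x" "T t y"
  shows "T (min (s + t) 1) (pl x y)"
proof -
  have "tm (im (cc s) x) (im (cc t) y) \<in> F" using assms F_tm unfolding T_def by simp
  then have "im (pl (cc s) (cc t)) (pl x y) \<in> F" using F_up M1[of "cc s" x "cc t" y] assms by simp
  then show ?thesis unfolding T_def using c_pl assms by simp
qed
lemma B_pl: assumes "x \<in> C" "y \<in> C" "0 \<le> s" "s \<le> 1" "0 \<le> t" "t \<le> 1" "B s x" "B t y"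
  shows "B (min (s + t) 1) (pl x y)"
proof -
  have "tm (im x (cc s)) (im y (cc t)) \<in> F" using assms F_tm unfolding B_def by simp
  then have "im (pl x y) (pl (cc s) (cc t)) \<in> F" using F_up M1[of x "cc s" y "cc t"] assms by simp
  then show ?thesis unfolding B_def using c_pl assms by simp
qed

lemma of_rat_min1: "real_of_rat (min (s + t) 1) = min (real_of_rat s + real_of_rat t) 1"
  by (simp add: min_def of_rat_add[symmetric] of_rat_less_eq)

lemma h_pl: assumes x: "x \<in> C" and y: "y \<in> C" shows "h (pl x y) = min (h x + h y) 1"
proof -
  have r: "0 \<le> h x" "h x \<le> 1" "0 \<le> h y" "h y \<le> 1" "0 \<le> h (pl x y)" "h (pl x y) \<le> 1"
    using h_range x y by auto
  have ge: "min (h x + h y) 1 \<le> h (pl x y)"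
  proof (rule ccontr)
    assume "\<not> ?thesis"
    define d where "d = min (h x + h y) 1 - h (pl x y)"
    have d: "0 < d" using \<open>\<not> _\<close> unfolding d_def by (simp add: not_le)
    obtain s where s: "0 \<le> s" "s \<le> 1" "T s x" "h x - d/2 < real_of_rat s" using T_near[of x "d/2"] x d by auto
    obtain t where t: "0 \<le> t" "t \<le> 1" "T t y" "h y - d/2 < real_of_rat t" using T_near[of y "d/2"] y d by auto
    have "T (min (s + t) 1) (pl x y)" using T_pl x y s t by simp
    then have "real_of_rat (min (s + t) 1) \<le> h (pl x y)" using h_T[of "pl x y" "min (s + t) 1"] x y s t by simp
    then have mm: "min (real_of_rat s + real_of_rat t) 1 \<le> h (pl x y)" unfolding of_rat_min1 .
    have m1: "min (h x + h y) 1 \<le> h x + h y" "min (h x + h y) 1 \<le> 1" by auto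
    have "min (real_of_rat s + real_of_rat t) 1 = real_of_rat s + real_of_rat t \<or> min (real_of_rat s + real_of_rat t) (1::real) = 1" by auto
    then show False using mm m1 s t d unfolding d_def by (elim disjE) argo+
  qed
  have le: "h (pl x y) \<le> h x + h y"
  proof (rule ccontr)
    assume "\<not> ?thesis"
    define d where "d = h (pl x y) - h x - h y"
    have d: "0 < d" using \<open>\<not> _\<close> by (simp add: d_def)
    obtain s where s: "0 \<le> s" "s \<le> 1" "B s x" "real_of_rat s < h x + d/2" using B_near[of x "d/2"] x d by auto
    obtain t where t: "0 \<le> t" "t \<le> 1" "B t y" "real_of_rat t < h y + d/2" using B_near[of y "d/2"] y d by auto
    have "B (min (s + t) 1) (pl x y)" using B_pl x y s t by simp
    then have "h (pl x y) \<le> real_of_rat (min (s + t) 1)" using h_B[of "pl x y" "min (s + t) 1"] x y s t by simp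
    then have mm: "h (pl x y) \<le> min (real_of_rat s + real_of_rat t) 1" unfolding of_rat_min1 .
    have "min (real_of_rat s + real_of_rat t) 1 \<le> real_of_rat s + real_of_rat t" by auto
    then show False using mm s t d unfolding d_def by argo
  qed
  show ?thesis using ge le r by simp
qed

lemma h_one: assumes x: "x \<in> C" shows "h x = 1 \<longleftrightarrow> x \<in> F"
proof
  assume "x \<in> F"
  then have "real_of_rat 1 \<le> h x" using T1 h_T[of x 1] x by simp
  moreover have "h x \<le> 1" using h_range[OF x] by simp
  ultimately show "h x = 1" by simp
next
  assume h1: "h x = 1"
  show "x \<in> F"
  proof (rule ccontr)
    assume "x \<notin> F"
    then obtain n where n: "ng (pw x n) \<in> F" using simple x by blast
    have "n \<noteq> 0" using n zr_notin by (cases n) auto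
    define r where "r = (1 - 1 / (2 * of_nat n) :: rat)"
    have r01: "0 \<le> r" "r < 1" using \<open>n \<noteq> 0\<close> by (auto simp: r_def field_simps)
    have "real_of_rat r < h x" using r01 h1 by (simp add: of_rat_less[of r 1, simplified])
    then have "T r x" using lt_h_T x r01 by simp
    then have "pw (im (cc r) x) n \<in> F" using pw_F unfolding T_def by simp
    then have "im (pw (cc r) n) (pw x n) \<in> F" using F_up pw_im[of "cc r" x n] x r01 by simp
    then have "tm (im (pw (cc r) n) (pw x n)) (im (pw x n) zr) \<in> F" using F_tm n x im_zr by simp
    then have "im (pw (cc r) n) zr \<in> F" using F_up im_trans[of "pw (cc r) n" "pw x n" zr] x r01 by simp
    then have "ng (pw (cc r) n) \<in> F" using im_zr r01 by simp
    moreover have "max 0 (1 - of_nat n * (1 - r)) = 1/2" using \<open>n \<noteq> 0\<close> by (simp add: r_def)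
    ultimately have "cc (1 - 1/2) \<in> F" using c_pw[of r n] c_ng[of "1/2"] r01 by simp
    then show False using c_F[of "1 - 1/2"] by simp
  qed
qed

lemma h_hom: "std_hom A h" and h_ker: "{y \<in> C. h y = 1} = F"
proof -
  show "std_hom A h" unfolding std_hom_def using h_range h_pl h_ng h_c by simp
  show "{y \<in> C. h y = 1} = F" using h_one F_C by auto
qed

end

context pmv
begin

lemma hom_on: "std_hom A g \<Longrightarrow> g on = 1"
  unfolding std_hom_def on_def' using c_ng[of 0] by auto
lemma hom_range: "std_hom A g \<Longrightarrow> x \<in> C \<Longrightarrow> 0 \<le> g x \<and> g x \<le> 1"
  unfolding std_hom_def by blast
lemma hom_pl: "std_hom A g \<Longrightarrow> x \<in> C \<Longrightarrow> y \<in> C \<Longrightarrow> g (pl x y) = min (g x + g y) 1"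
  unfolding std_hom_def by blast
lemma hom_ng: "std_hom A g \<Longrightarrow> x \<in> C \<Longrightarrow> g (ng x) = 1 - g x"
  unfolding std_hom_def by blast
lemma hom_c: "std_hom A g \<Longrightarrow> 0 \<le> r \<Longrightarrow> r \<le> 1 \<Longrightarrow> g (cc r) = real_of_rat r"
  unfolding std_hom_def by blast
lemma hom_im: "std_hom A g \<Longrightarrow> x \<in> C \<Longrightarrow> 0 \<le> r \<Longrightarrow> r \<le> 1 \<Longrightarrow>
   g (im (cc r) x) = min (1 - real_of_rat r + g x) 1"
  unfolding mv_imp_def by (simp add: hom_pl hom_ng hom_c)
lemma hom_tm: "std_hom A g \<Longrightarrow> x \<in> C \<Longrightarrow> y \<in> C \<Longrightarrow> g (tm x y) = max 0 (g x + g y - 1)"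
  unfolding mv_times_def by (simp add: hom_pl hom_ng min_def max_def)
lemma hom_mono: "std_hom A g \<Longrightarrow> x \<in> C \<Longrightarrow> y \<in> C \<Longrightarrow> le x y \<Longrightarrow> g x \<le> g y"
proof -
  assume a: "std_hom A g" "x \<in> C" "y \<in> C" "le x y"
  then have "g (pl (ng x) y) = 1" using hom_on by (simp add: le_iff)
  then have "min (1 - g x + g y) 1 = 1" using a by (simp add: hom_pl hom_ng)
  then show ?thesis by (simp add: min_def split: if_splits)
qed

lemma hom_cut: assumes "std_hom A g" "x \<in> C" "0 \<le> r" "r \<le> 1"
  shows "im (cc r) x \<in> {y \<in> C. g y = 1} \<longleftrightarrow> real_of_rat r \<le> g x"
  using hom_im[OF assms] assms by (auto simp: min_def)

lemma std_unique: assumes g1: "std_hom A g1" and g2: "std_hom A g2"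
  and k: "{y \<in> C. g1 y = 1} = {y \<in> C. g2 y = 1}" and x: "x \<in> C"
  shows "g1 x = g2 x"
proof -
  have iff: "real_of_rat r \<le> g1 x \<longleftrightarrow> real_of_rat r \<le> g2 x" if "0 \<le> r" "r \<le> 1" for r
    using hom_cut[OF g1 x that] hom_cut[OF g2 x that] k by simp
  have r1: "0 \<le> g1 x" "g1 x \<le> 1" "0 \<le> g2 x" "g2 x \<le> 1" using hom_range g1 g2 x by auto
  show ?thesis
  proof (rule ccontr)
    assume "g1 x \<noteq> g2 x"
    then consider "g1 x < g2 x" | "g2 x < g1 x" by linarith
    then show False
    proof cases
      case 1
      then obtain q where q: "g1 x < real_of_rat q" "real_of_rat q < g2 x" using rat_between by blast
      then have "0 \<le> q" "q \<le> 1" using rat_01[of "g1 x" q "g2 x"] r1 by auto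
      then show False using iff[of q] q by simp
    next
      case 2
      then obtain q where q: "g2 x < real_of_rat q" "real_of_rat q < g1 x" using rat_between by blast
      then have "0 \<le> q" "q \<le> 1" using rat_01[of "g2 x" q "g1 x"] r1 by auto
      then show False using iff[of q] q by simp
    qed
  qed
qed

end

context pmf
begin
lemma quot_val_eq: "x \<in> C \<Longrightarrow> quot_val A F x = h x"
  unfolding quot_val_def
proof (rule the_equality)
  assume x: "x \<in> C"
  show "\<exists>g. std_hom A g \<and> {y \<in> C. g y = 1} = F \<and> h x = g x" using h_hom h_ker by blast
  fix v assume "\<exists>g. std_hom A g \<and> {y \<in> C. g y = 1} = F \<and> v = g x"
  then obtain g where g: "std_hom A g" "{y \<in> C. g y = 1} = F" "v = g x" by blast
  then show "v = h x" using std_unique[OF g(1) h_hom _ x] h_ker by simp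
qed
end

lemma part1:
  fixes I :: "'i set" and R :: "'i \<Rightarrow> 'j \<Rightarrow> real" and x y :: "'i \<Rightarrow> real"
  assumes R: "\<forall>i\<in>I. R i j \<in> {0, 1}" and x: "\<forall>i\<in>I. x i \<in> {0..1}" and y: "\<forall>i\<in>I. y i \<in> {0..1}"
  shows "r_times (f_R I R x j) (f_R I R y j) \<le> f_R I R (\<lambda>i. r_times (x i) (y i)) j"
proof (cases "I = {}")
  case True then show ?thesis by (simp add: f_R_def inf01_def r_times_def)
next
  case False
  define a where "a = f_R I R x j"
  define b where "b = f_R I R y j"
  have bdd: "bdd_below ((\<lambda>i. r_imp (R i j) (z i)) ` I)" if "\<forall>i\<in>I. z i \<in> {0..1}" for z
    unfolding bdd_below_def using R that
    by (intro exI[of _ 0]) (auto simp: r_imp_def)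
  have a_le: "a \<le> r_imp (R i j) (x i)" if "i \<in> I" for i
    unfolding a_def f_R_def inf01_def using False that by (auto intro!: cInf_lower bdd x)
  have b_le: "b \<le> r_imp (R i j) (y i)" if "i \<in> I" for i
    unfolding b_def f_R_def inf01_def using False that by (auto intro!: cInf_lower bdd y)
  have key: "r_times a b \<le> r_imp (R i j) (r_times (x i) (y i))" if i: "i \<in> I" for i
  proof -
    have "r_times a b \<le> r_times (r_imp (R i j) (x i)) (r_imp (R i j) (y i))"
      using a_le[OF i] b_le[OF i] by (simp add: r_times_def)
    also have "\<dots> \<le> r_imp (R i j) (r_times (x i) (y i))"
      using R x y i by (auto simp: r_imp_def r_times_def)
    finally show ?thesis .
  qed
  have "r_times a b \<le> Inf ((\<lambda>i. r_imp (R i j) (r_times (x i) (y i))) ` I)"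
    using False key by (auto intro!: cInf_greatest)
  then show ?thesis using False unfolding a_def b_def by (simp add: f_R_def inf01_def)
qed


lemma part2:
  fixes A :: "('a, 'c) pav_scheme" and B :: "('b, 'd) pav_scheme" and f :: "'a \<Rightarrow> 'b" and g
  assumes pA: "is_pavelka A" and pB: "is_pavelka B" and adj: "adjoint_pair A B f g"
    and mult: "\<forall>x\<in>carrier A. \<forall>y\<in>carrier A. mv_le B (mv_times B (f x) (f y)) (f (mv_times A x y))"
    and F: "F \<in> spec_M A" and G: "G \<in> spec_M B"
  shows "rel_R A B f F G \<in> {0, 1}"
proof -
  interpret IA: pmf A F
    by unfold_locales (insert pA F, auto simp: is_pavelka_def spec_M_def)
  interpret IB: pmf B G
    by unfold_locales (insert pB G, auto simp: is_pavelka_def spec_M_def)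
  have fC: "f a \<in> carrier B" if "a \<in> carrier A" for a using adj that unfolding adjoint_pair_def by blast
  have fc: "mv_imp B (cst B r) (f a) = f (mv_imp A (cst A r) a)" if "0 \<le> r" "r \<le> 1" "a \<in> carrier A" for r a
    using adj that unfolding adjoint_pair_def by blast
  define phi where "phi a = IB.h (f a)" for a
  define psi where "psi a = IA.h a" for a
  have rng: "0 \<le> phi a \<and> phi a \<le> 1 \<and> 0 \<le> psi a \<and> psi a \<le> 1" if "a \<in> carrier A" for a
    using IA.h_range IB.h_range fC that unfolding phi_def psi_def by blast
  have eqR: "rel_R A B f F G = inf01 ((\<lambda>a. r_imp (phi a) (psi a)) ` carrier A)"
    unfolding rel_R_def phi_def psi_def
    by (rule arg_cong[where f=inf01], rule image_cong, simp, simp add: IA.quot_val_eq IB.quot_val_eq fC)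
  have ne: "carrier A \<noteq> {}" using IA.zr_C by blast
  show ?thesis
  proof (cases "\<forall>a\<in>carrier A. phi a \<le> psi a")
    case True
    then have "(\<lambda>a. r_imp (phi a) (psi a)) ` carrier A = {1}"
      using ne by (auto simp: r_imp_def min_def)
    then show ?thesis unfolding eqR inf01_def by simp
  next
    case False
    then obtain a where a: "a \<in> carrier A" "psi a < phi a" by force
    obtain q where q: "psi a < real_of_rat q" "real_of_rat q < phi a" using rat_between[OF a(2)] by blast
    have q01: "0 \<le> q" "q \<le> 1" using rat_01[of "psi a" q "phi a"] q rng[OF a(1)] by auto
    define b0 where "b0 = mv_imp A (cst A q) a"
    have b0C: "b0 \<in> carrier A" unfolding b0_def using a q01 by simp
    define d where "d = real_of_rat q - psi a"
    have d: "0 < d" using q by (simp add: d_def)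
    have psib0: "psi b0 = 1 - d"
      unfolding psi_def b0_def d_def psi_def using IA.hom_im[OF IA.h_hom a(1) q01] q by (simp add: psi_def min_def)
    have phib0: "phi b0 = 1"
      unfolding phi_def b0_def using fc[OF q01 a(1), symmetric] IB.hom_im[OF IB.h_hom fC[OF a(1)] q01] q
      by (simp add: phi_def min_def)
    have psin: "psi (IA.pw b0 (Suc n)) = max 0 (1 - real (Suc n) * d)" for n
    proof (induction n)
      case 0 then show ?case using psib0 b0C d rng[OF b0C] by simp
    next
      case (Suc n)
      have "psi (IA.pw b0 (Suc (Suc n))) = max 0 (psi b0 + psi (IA.pw b0 (Suc n)) - 1)"
        unfolding psi_def using IA.hom_tm[OF IA.h_hom] b0C by simp
      also have "\<dots> = max 0 (1 - real (Suc (Suc n)) * d)" using Suc psib0 d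
        by (simp add: max_def algebra_simps)
      finally show ?case .
    qed
    have phin: "phi (IA.pw b0 (Suc n)) = 1" for n
    proof (induction n)
      case 0 then show ?case using phib0 b0C by simp
    next
      case (Suc n)
      have P: "IA.pw b0 (Suc n) \<in> carrier A" using b0C by simp
      have "mv_le B (mv_times B (f b0) (f (IA.pw b0 (Suc n)))) (f (mv_times A b0 (IA.pw b0 (Suc n))))"
        using mult b0C P by blast
      then have "IB.h (mv_times B (f b0) (f (IA.pw b0 (Suc n)))) \<le> IB.h (f (mv_times A b0 (IA.pw b0 (Suc n))))"
        using IB.hom_mono[OF IB.h_hom] fC b0C P by simp
      moreover have "IB.h (mv_times B (f b0) (f (IA.pw b0 (Suc n)))) = 1"
        using IB.hom_tm[OF IB.h_hom] fC b0C P Suc phib0 unfolding phi_def by simp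
      ultimately have "1 \<le> phi (IA.pw b0 (Suc (Suc n)))" unfolding phi_def by simp
      moreover have "phi (IA.pw b0 (Suc (Suc n))) \<le> 1" using rng[OF IA.pw_C[OF b0C, of "Suc (Suc n)"]] by blast
      ultimately show ?case by simp
    qed
    obtain n where n: "1 < real n * d" using ex_less_of_nat_mult d by blast
    have "max 0 (1 - real (Suc n) * d) = 0" using n d by (simp add: algebra_simps)
    then have p0: "psi (IA.pw b0 (Suc n)) = 0" using psin[of n] by argo
    have z: "r_imp (phi (IA.pw b0 (Suc n))) (psi (IA.pw b0 (Suc n))) = 0"
      unfolding p0 phin[of n] by (simp add: r_imp_def)
    have zin: "0 \<in> (\<lambda>a. r_imp (phi a) (psi a)) ` carrier A"
      by (rule image_eqI[where x="IA.pw b0 (Suc n)"], rule z[symmetric], rule IA.pw_C[OF b0C])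
    have pos: "\<forall>v\<in>(\<lambda>a. r_imp (phi a) (psi a)) ` carrier A. 0 \<le> v"
      using rng by (auto simp: r_imp_def)
    have "Inf ((\<lambda>a. r_imp (phi a) (psi a)) ` carrier A) = 0"
      using zin pos by (intro cInf_eq_minimum) auto
    then show ?thesis unfolding eqR inf01_def using ne by simp
  qed
qed

theorem theorem10:
  shows "(\<forall>(I :: 'i set) (J :: 'j set) (R :: 'i \<Rightarrow> 'j \<Rightarrow> real) (x :: 'i \<Rightarrow> real) y.
            (\<forall>i\<in>I. \<forall>j\<in>J. R i j \<in> {0, 1}) \<and>
            (\<forall>i\<in>I. x i \<in> {0..1}) \<and> (\<forall>i\<in>I. y i \<in> {0..1}) \<longrightarrow>
            (\<forall>j\<in>J. r_times (f_R I R x j) (f_R I R y j)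
                      \<le> f_R I R (\<lambda>i. r_times (x i) (y i)) j))
       \<and>
       (\<forall>(A :: 'a pav) (B :: 'b pav) (f :: 'a \<Rightarrow> 'b) (g :: 'b \<Rightarrow> 'a).
            is_pavelka A \<and> is_pavelka B \<and> semisimple A \<and> semisimple B \<and>
            adjoint_pair A B f g \<and>
            (\<forall>x\<in>carrier A. \<forall>y\<in>carrier A. mv_le B (mv_times B (f x) (f y)) (f (mv_times A x y)))
            \<longrightarrow>
            (\<forall>F\<in>spec_M A. \<forall>G\<in>spec_M B. rel_R A B f F G \<in> {0, 1}))"
proof (intro conjI allI impI ballI)
  fix I :: "'i set" and J :: "'j set" and R :: "'i \<Rightarrow> 'j \<Rightarrow> real" and x y :: "'i \<Rightarrow> real" and j
  assume h: "(\<forall>i\<in>I. \<forall>j\<in>J. R i j \<in> {0, 1}) \<and> (\<forall>i\<in>I. x i \<in> {0..1}) \<and> (\<forall>i\<in>I. y i \<in> {0..1})"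
    and j: "j \<in> J"
  show "r_times (f_R I R x j) (f_R I R y j) \<le> f_R I R (\<lambda>i. r_times (x i) (y i)) j"
    using part1[of I R j x y] h j by blast
next
  fix A :: "'a pav" and B :: "'b pav" and f :: "'a \<Rightarrow> 'b" and g :: "'b \<Rightarrow> 'a" and F G
  assume h: "is_pavelka A \<and> is_pavelka B \<and> semisimple A \<and> semisimple B \<and>
            adjoint_pair A B f g \<and>
            (\<forall>x\<in>carrier A. \<forall>y\<in>carrier A. mv_le B (mv_times B (f x) (f y)) (f (mv_times A x y)))"
    and F: "F \<in> spec_M A" and G: "G \<in> spec_M B"
  show "rel_R A B f F G \<in> {0, 1}" using part2[of A B f g F G] h F G by blast
qed

end
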